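(* Let $\Phi$ be the set of formulas of $NOM$ and let $[\![\cdot]\!]:\Phi\to\mathcal Q$ be an interpretation into an orthomodular lattice $\mathcal Q$. If for all formulas $\phi,\psi$ we have $[\![\phi\wedge\psi]\!]=[\![\phi]\!]\wedge[\![\psi]\!]$, $[\![\phi\rightarrow\psi]\!]=[\![\phi]\!]\rightarrow[\![\psi]\!]$, and $[\![\neg\phi]\!]=\neg[\![\phi]\!]$, then all the rules of inference of $NOM$ are sound in this interpretation.
   Context: The propositional deductive system $NOM$: formulas are built from propositional letters using $\wedge$, $\rightarrow$, $\neg$. Sequents are $\phi_1,\ldots,\phi_n\vdash\psi$ ($n\ge0$) with antecedent a finite ordered sequence. With $\Gamma$ a finite possibly empty sequence of formulas and $\phi,\psi,\chi$ formulas, the rules of $NOM$ are: (assumption) $\Gamma,\phi\vdash\phi$; (cut) $\Gamma\vdash\phi$, $\Gamma,\phi\vdash\psi$ $\Rightarrow$ $\Gamma\vdash\psi$; (paste) $\Gamma\vdash\phi$, $\Gamma\vdash\psi$ $\Rightarrow$ $\Gamma,\phi\vdash\psi$; (compatible exchange) $\Gamma,\phi,\psi\vdash\phi$, $\Gamma,\phi,\psi\vdash\chi$, $\Gamma,\psi,\phi\vdash\psi$ $\Rightarrow$ $\Gamma,\psi,\phi\vdash\chi$; ($\wedge$-intro) $\Gamma\vdash\phi$, $\Gamma\vdash\psi$ $\Rightarrow$ $\Gamma\vdash\phi\wedge\psi$; ($\wedge$-elim) $\Gamma\vdash\phi\wedge\psi$ $\Rightarrow$ $\Gamma\vdash\phi$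 and $\Rightarrow$ $\Gamma\vdash\psi$; ($\rightarrow$-intro) $\Gamma,\phi\vdash\psi$ $\Rightarrow$ $\Gamma\vdash\phi\rightarrow\psi$; ($\rightarrow$-elim) $\Gamma\vdash\phi\rightarrow\psi$ $\Rightarrow$ $\Gamma,\phi\vdash\psi$; (excluded middle) $\Gamma,\phi\vdash\psi$, $\Gamma,\neg\phi\vdash\psi$ $\Rightarrow$ $\Gamma\vdash\psi$; (explosion) $\Gamma\vdash\neg\phi$ $\Rightarrow$ $\Gamma,\phi\vdash\psi$. An orthomodular lattice is a bounded lattice with an order-reversing involution $\neg$ satisfying $a\wedge\neg a=\bot$, $a\vee\neg a=\top$, and $a\le b\Rightarrow a\vee(\neg a\wedge b)=b$. In it, $a\mathbin{\&}b=(a\vee\neg b)\wedge b$ and $a\rightarrow b=\neg a\vee(a\wedge b)$; $\&$ associates to the left and $a_1\mathbin{\&}\cdots\mathbin{\&}a_n=\top$ when $n=0$. An interpretation is any function $[\![\cdot]\!]:\Phi\to\mathcal Q$ into an orthomodular lattice. A sequent $\phi_1,\ldots,\phi_n\vdash\psi$ is true in it if $[\![\phi_1]\!]\mathbin{\&}\cdots\mathbin{\&}[\![\phi_n]\!]\le[\![\psi]\!]$; a rule of inference is sound if, in every instance, its conclusion is true whenever all its premises are true. *)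

theory Defs
  imports Main
begin

datatype 'p form = Letter 'p | And "'p form" "'p form" | Imp "'p form" "'p form" | Neg "'p form"

definition orthomodular :: "('a::bounded_lattice \<Rightarrow> 'a) \<Rightarrow> bool" where
  "orthomodular neg \<longleftrightarrow>
     (\<forall>a b. a \<le> b \<longrightarrow> neg b \<le> neg a) \<and>
     (\<forall>a. neg (neg a) = a) \<and>
     (\<forall>a. inf a (neg a) = bot) \<and>
     (\<forall>a. sup a (neg a) = top) \<and>
     (\<forall>a b. a \<le> b \<longrightarrow> sup a (inf (neg a) b) = b)"

definition sand :: "('a::bounded_lattice \<Rightarrow> 'a) \<Rightarrow> 'a \<Rightarrow> 'a \<Rightarrow> 'a" where
  "sand neg a b = inf (sup a (neg b)) b"

definition oimp :: "('a::bounded_lattice \<Rightarrow> 'a) \<Rightarrow> 'a \<Rightarrow> 'a \<Rightarrow> 'a" where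
  "oimp neg a b = sup (neg a) (inf a b)"

fun sands :: "('a::bounded_lattice \<Rightarrow> 'a) \<Rightarrow> 'a list \<Rightarrow> 'a" where
  "sands neg [] = top"
| "sands neg (x # xs) = foldl (sand neg) x xs"

definition seq_true :: "('a::bounded_lattice \<Rightarrow> 'a) \<Rightarrow> ('p form \<Rightarrow> 'a) \<Rightarrow> 'p form list \<Rightarrow> 'p form \<Rightarrow> bool" where
  "seq_true neg I \<Gamma> \<psi> \<longleftrightarrow> sands neg (map I \<Gamma>) \<le> I \<psi>"

end

theory Submission
  imports Defs
begin

lemma sands_snoc: "sands neg (xs @ [y]) = sand neg (sands neg xs) y"
  by (cases xs) (auto simp: sand_def)

locale oml_ctx =
  fixes neg :: "'a::bounded_lattice \<Rightarrow> 'a"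
  assumes oml: "orthomodular neg"
begin

lemma nn[simp]: "neg (neg a) = a" using oml unfolding orthomodular_def by blast
lemma anti: "a \<le> b \<Longrightarrow> neg b \<le> neg a" using oml unfolding orthomodular_def by blast
lemma anti_iff: "neg b \<le> neg a \<longleftrightarrow> a \<le> b" using anti[of "neg b" "neg a"] anti[of a b] by auto
lemma infc[simp]: "inf a (neg a) = bot" using oml unfolding orthomodular_def by blast
lemma supc[simp]: "sup a (neg a) = top" using oml unfolding orthomodular_def by blast
lemma omlaw: "a \<le> b \<Longrightarrow> sup a (inf (neg a) b) = b" using oml unfolding orthomodular_def by blast

lemma dm_sup: "neg (sup a b) = inf (neg a) (neg b)"
proof (rule antisym)
  show "neg (sup a b) \<le> inf (neg a) (neg b)" by (simp add: anti)
  have "neg (inf (neg a) (neg b)) \<ge> sup a b"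
    by (metis anti inf.cobounded1 inf.cobounded2 le_sup_iff nn)
  then show "inf (neg a) (neg b) \<le> neg (sup a b)" using anti by fastforce
qed

lemma dm_inf: "neg (inf a b) = sup (neg a) (neg b)"
  by (metis dm_sup nn)

lemma doml: "a \<le> b \<Longrightarrow> inf b (sup a (neg b)) = a"
proof -
  assume "a \<le> b"
  then have "sup (neg b) (inf b (neg a)) = neg a" using omlaw[of "neg b" "neg a"] anti by simp
  then have "neg (sup (neg b) (inf b (neg a))) = a" by simp
  then show ?thesis by (simp add: dm_sup dm_inf sup_commute)
qed

lemma sand_le: "sand neg t a \<le> a" by (simp add: sand_def)

lemma below_sand: "t \<le> sup (sand neg t a) (neg a)"
proof -
  have "sup (neg a) (inf a (sup t (neg a))) = sup t (neg a)"
    using omlaw[of "neg a" "sup t (neg a)"] by simp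
  then show ?thesis by (metis sand_def inf_commute sup_commute sup.cobounded1)
qed

lemma sand_of_le: "s \<le> a \<Longrightarrow> sand neg s a = s"
  using doml by (simp add: sand_def inf_commute)

lemma exch_aux:
  assumes "sand neg (sand neg t a) b \<le> a"
  shows "sand neg (sand neg t a) b = sand neg t (inf a b)"
proof -
  let ?x = "sand neg (sand neg t a) b" and ?m = "inf a b"
  have xm: "?x \<le> ?m" using assms sand_le by simp
  have "t \<le> sup (sand neg t a) (neg a)" by (rule below_sand)
  also have "sand neg t a \<le> sup ?x (neg b)" by (rule below_sand)
  finally have "t \<le> sup (sup ?x (neg b)) (neg a)" by (simp add: sup.coboundedI1 le_supI1)
  then have t: "t \<le> sup ?x (neg ?m)" by (simp add: dm_inf sup_assoc sup_commute sup_left_commute)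
  have "sand neg t ?m = inf ?m (sup t (neg ?m))" by (simp add: sand_def inf_commute)
  also have "\<dots> \<le> inf ?m (sup ?x (neg ?m))"
    using t by (meson inf_mono order_refl sup_least sup.cobounded2 sup.cobounded1 order_trans)
  also have "\<dots> = ?x" using doml[OF xm] .
  finally have 1: "sand neg t ?m \<le> ?x" .
  have "sand neg t a \<le> sup t (neg a)" by (simp add: sand_def)
  then have "?x \<le> sup (sup t (neg a)) (neg b)" unfolding sand_def[of neg "sand neg t a"]
    by (meson inf.coboundedI1 sup.mono order_refl)
  then have "?x \<le> sup t (neg ?m)" by (simp add: dm_inf sup_assoc)
  then have 2: "?x \<le> sand neg t ?m" using xm by (simp add: sand_def)
  from 1 2 show ?thesis by simp
qed

lemma exmid:
  assumes "sand neg s a \<le> c" "sand neg s (neg a) \<le> c"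
  shows "s \<le> c"
proof -
  let ?p = "sand neg s a" and ?q = "sand neg s (neg a)"
  let ?z = "inf (sup ?p (neg a)) (sup ?q a)"
  have sz: "s \<le> ?z" using below_sand[of s a] below_sand[of s "neg a"] by simp
  have pa: "?p \<le> a" and qa: "?q \<le> neg a" using sand_le by auto
  have pqz: "sup ?p ?q \<le> ?z"
    using pa qa by (simp add: le_supI1 le_supI2)
  have z1: "inf ?z (neg ?p) \<le> neg a"
  proof -
    have e: "inf (neg ?p) (sup (neg a) ?p) = neg a"
      using doml[of "neg a" "neg ?p"] anti[OF pa] by simp
    have "inf ?z (neg ?p) \<le> inf (neg ?p) (sup (neg a) ?p)"
      by (simp add: le_infI1 sup_commute)
    then show ?thesis using e by simp
  qed
  have z2: "inf ?z (neg ?q) \<le> a"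
  proof -
    have e: "inf (neg ?q) (sup a ?q) = a"
      using doml[of a "neg ?q"] anti[OF qa] by simp
    have "?z \<le> sup ?q a" by (rule inf.cobounded2)
    then have "?z \<le> sup a ?q" by (simp add: sup_commute)
    then have "inf ?z (neg ?q) \<le> sup a ?q" by (rule le_infI1)
    then have "inf ?z (neg ?q) \<le> inf (neg ?q) (sup a ?q)"
      by (rule le_infI[OF inf.cobounded2])
    then show ?thesis using e by simp
  qed
  have "inf ?z (neg (sup ?p ?q)) \<le> inf a (neg a)"
  proof -
    have "inf ?z (neg (sup ?p ?q)) = inf (inf ?z (neg ?p)) (inf ?z (neg ?q))"
      by (simp add: dm_sup inf_assoc inf_commute inf_left_commute)
    also have "\<dots> \<le> inf (neg a) a" using z1 z2 by (rule inf_mono)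
    finally show ?thesis by (simp add: inf_commute)
  qed
  then have bot: "inf (neg (sup ?p ?q)) ?z = bot" by (simp add: inf_commute bot_unique)
  have "?z = sup (sup ?p ?q) bot" using omlaw[OF pqz] bot by simp
  then have "?z \<le> c" using assms by simp
  with sz show ?thesis by (rule order_trans)
qed

end

theorem theorem3p5:
  fixes neg :: "'a::bounded_lattice \<Rightarrow> 'a" and I :: "'p form \<Rightarrow> 'a"
  assumes oml: "orthomodular neg"
    and hand: "\<And>\<phi> \<psi>. I (And \<phi> \<psi>) = inf (I \<phi>) (I \<psi>)"
    and himp: "\<And>\<phi> \<psi>. I (Imp \<phi> \<psi>) = oimp neg (I \<phi>) (I \<psi>)"
    and hneg: "\<And>\<phi>. I (Neg \<phi>) = neg (I \<phi>)"
  shows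
    \<comment> \<open>assumption\<close>
    "(\<forall>\<Gamma> \<phi>. seq_true neg I (\<Gamma> @ [\<phi>]) \<phi>) \<and>
     \<comment> \<open>cut\<close>
     (\<forall>\<Gamma> \<phi> \<psi>. seq_true neg I \<Gamma> \<phi> \<longrightarrow> seq_true neg I (\<Gamma> @ [\<phi>]) \<psi> \<longrightarrow> seq_true neg I \<Gamma> \<psi>) \<and>
     \<comment> \<open>paste\<close>
     (\<forall>\<Gamma> \<phi> \<psi>. seq_true neg I \<Gamma> \<phi> \<longrightarrow> seq_true neg I \<Gamma> \<psi> \<longrightarrow> seq_true neg I (\<Gamma> @ [\<phi>]) \<psi>) \<and>
     \<comment> \<open>compatible exchange\<close>
     (\<forall>\<Gamma> \<phi> \<psi> \<chi>. seq_true neg I (\<Gamma> @ [\<phi>, \<psi>]) \<phi> \<longrightarrow> seq_true neg I (\<Gamma> @ [\<phi>, \<psi>]) \<chi> \<longrightarrow>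
        seq_true neg I (\<Gamma> @ [\<psi>, \<phi>]) \<psi> \<longrightarrow> seq_true neg I (\<Gamma> @ [\<psi>, \<phi>]) \<chi>) \<and>
     \<comment> \<open>and-intro\<close>
     (\<forall>\<Gamma> \<phi> \<psi>. seq_true neg I \<Gamma> \<phi> \<longrightarrow> seq_true neg I \<Gamma> \<psi> \<longrightarrow> seq_true neg I \<Gamma> (And \<phi> \<psi>)) \<and>
     \<comment> \<open>and-elim (both)\<close>
     (\<forall>\<Gamma> \<phi> \<psi>. seq_true neg I \<Gamma> (And \<phi> \<psi>) \<longrightarrow> seq_true neg I \<Gamma> \<phi>) \<and>
     (\<forall>\<Gamma> \<phi> \<psi>. seq_true neg I \<Gamma> (And \<phi> \<psi>) \<longrightarrow> seq_true neg I \<Gamma> \<psi>) \<and>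
     \<comment> \<open>imp-intro\<close>
     (\<forall>\<Gamma> \<phi> \<psi>. seq_true neg I (\<Gamma> @ [\<phi>]) \<psi> \<longrightarrow> seq_true neg I \<Gamma> (Imp \<phi> \<psi>)) \<and>
     \<comment> \<open>imp-elim\<close>
     (\<forall>\<Gamma> \<phi> \<psi>. seq_true neg I \<Gamma> (Imp \<phi> \<psi>) \<longrightarrow> seq_true neg I (\<Gamma> @ [\<phi>]) \<psi>) \<and>
     \<comment> \<open>excluded middle\<close>
     (\<forall>\<Gamma> \<phi> \<psi>. seq_true neg I (\<Gamma> @ [\<phi>]) \<psi> \<longrightarrow> seq_true neg I (\<Gamma> @ [Neg \<phi>]) \<psi> \<longrightarrow> seq_true neg I \<Gamma> \<psi>) \<and>
     \<comment> \<open>explosion\<close>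
     (\<forall>\<Gamma> \<phi> \<psi>. seq_true neg I \<Gamma> (Neg \<phi>) \<longrightarrow> seq_true neg I (\<Gamma> @ [\<phi>]) \<psi>)"
proof -
  interpret O: oml_ctx neg using oml by unfold_locales
  have sn: "\<And>\<Gamma> \<phi>. sands neg (map I \<Gamma> @ [I \<phi>]) = sand neg (sands neg (map I \<Gamma>)) (I \<phi>)"
    by (simp add: sands_snoc)
  have sn2: "\<And>\<Gamma> \<phi> \<psi>. sands neg (map I \<Gamma> @ [I \<phi>, I \<psi>]) =
      sand neg (sand neg (sands neg (map I \<Gamma>)) (I \<phi>)) (I \<psi>)"
    using sands_snoc by (metis append.assoc append_Cons append_Nil)
  have A: "\<forall>\<Gamma> \<phi>. seq_true neg I (\<Gamma> @ [\<phi>]) \<phi>"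
    by (simp add: seq_true_def sn O.sand_le)
  have C: "\<forall>\<Gamma> \<phi> \<psi>. seq_true neg I \<Gamma> \<phi> \<longrightarrow> seq_true neg I (\<Gamma> @ [\<phi>]) \<psi> \<longrightarrow> seq_true neg I \<Gamma> \<psi>"
    by (simp add: seq_true_def sn O.sand_of_le)
  have P: "\<forall>\<Gamma> \<phi> \<psi>. seq_true neg I \<Gamma> \<phi> \<longrightarrow> seq_true neg I \<Gamma> \<psi> \<longrightarrow> seq_true neg I (\<Gamma> @ [\<phi>]) \<psi>"
    by (simp add: seq_true_def sn O.sand_of_le)
  have E: "\<forall>\<Gamma> \<phi> \<psi> \<chi>. seq_true neg I (\<Gamma> @ [\<phi>, \<psi>]) \<phi> \<longrightarrow> seq_true neg I (\<Gamma> @ [\<phi>, \<psi>]) \<chi> \<longrightarrow>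
        seq_true neg I (\<Gamma> @ [\<psi>, \<phi>]) \<psi> \<longrightarrow> seq_true neg I (\<Gamma> @ [\<psi>, \<phi>]) \<chi>"
  proof (intro allI impI)
    fix \<Gamma> \<phi> \<psi> \<chi>
    assume h1: "seq_true neg I (\<Gamma> @ [\<phi>, \<psi>]) \<phi>" and h2: "seq_true neg I (\<Gamma> @ [\<phi>, \<psi>]) \<chi>"
      and h3: "seq_true neg I (\<Gamma> @ [\<psi>, \<phi>]) \<psi>"
    let ?t = "sands neg (map I \<Gamma>)"
    have "sand neg (sand neg ?t (I \<phi>)) (I \<psi>) = sand neg ?t (inf (I \<phi>) (I \<psi>))"
      using h1 O.exch_aux by (simp add: seq_true_def sn2)
    moreover have "sand neg (sand neg ?t (I \<psi>)) (I \<phi>) = sand neg ?t (inf (I \<psi>) (I \<phi>))"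
      using h3 O.exch_aux by (simp add: seq_true_def sn2)
    ultimately show "seq_true neg I (\<Gamma> @ [\<psi>, \<phi>]) \<chi>"
      using h2 by (simp add: seq_true_def sn2 inf_commute)
  qed
  have IM: "\<forall>\<Gamma> \<phi> \<psi>. seq_true neg I (\<Gamma> @ [\<phi>]) \<psi> \<longrightarrow> seq_true neg I \<Gamma> (Imp \<phi> \<psi>)"
  proof (intro allI impI)
    fix \<Gamma> \<phi> \<psi>
    assume h: "seq_true neg I (\<Gamma> @ [\<phi>]) \<psi>"
    let ?s = "sands neg (map I \<Gamma>)"
    have "sand neg ?s (I \<phi>) \<le> inf (I \<phi>) (I \<psi>)" using h O.sand_le
      by (simp add: seq_true_def sn)
    then have "sup (sand neg ?s (I \<phi>)) (neg (I \<phi>)) \<le> oimp neg (I \<phi>) (I \<psi>)"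
      by (simp add: oimp_def le_supI2)
    then show "seq_true neg I \<Gamma> (Imp \<phi> \<psi>)"
      using order_trans[OF O.below_sand[of ?s "I \<phi>"]] by (simp add: seq_true_def himp)
  qed
  have IE: "\<forall>\<Gamma> \<phi> \<psi>. seq_true neg I \<Gamma> (Imp \<phi> \<psi>) \<longrightarrow> seq_true neg I (\<Gamma> @ [\<phi>]) \<psi>"
  proof (intro allI impI)
    fix \<Gamma> \<phi> \<psi>
    assume h: "seq_true neg I \<Gamma> (Imp \<phi> \<psi>)"
    let ?s = "sands neg (map I \<Gamma>)" and ?a = "I \<phi>" and ?b = "I \<psi>"
    have "?s \<le> sup (neg ?a) (inf ?a ?b)" using h by (simp add: seq_true_def himp oimp_def)
    then have "sand neg ?s ?a \<le> inf (sup (inf ?a ?b) (neg ?a)) ?a"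
      unfolding sand_def by (simp add: le_infI1 sup_commute)
    also have "\<dots> = inf ?a ?b" using O.doml[of "inf ?a ?b" ?a] by (simp add: inf_commute)
    finally show "seq_true neg I (\<Gamma> @ [\<phi>]) \<psi>" by (simp add: seq_true_def sn le_infI2)
  qed
  have EM: "\<forall>\<Gamma> \<phi> \<psi>. seq_true neg I (\<Gamma> @ [\<phi>]) \<psi> \<longrightarrow> seq_true neg I (\<Gamma> @ [Neg \<phi>]) \<psi> \<longrightarrow> seq_true neg I \<Gamma> \<psi>"
    using O.exmid by (simp add: seq_true_def sands_snoc hneg)
  have EX: "\<forall>\<Gamma> \<phi> \<psi>. seq_true neg I \<Gamma> (Neg \<phi>) \<longrightarrow> seq_true neg I (\<Gamma> @ [\<phi>]) \<psi>"
  proof (intro allI impI)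
    fix \<Gamma> \<phi> \<psi>
    assume h: "seq_true neg I \<Gamma> (Neg \<phi>)"
    let ?s = "sands neg (map I \<Gamma>)" and ?a = "I \<phi>"
    have "sup ?s (neg ?a) = neg ?a" using h by (simp add: seq_true_def hneg sup_absorb2)
    then have "sand neg ?s ?a = bot" by (simp add: sand_def inf_commute)
    then show "seq_true neg I (\<Gamma> @ [\<phi>]) \<psi>" by (simp add: seq_true_def sn)
  qed
  have AI: "\<forall>\<Gamma> \<phi> \<psi>. seq_true neg I \<Gamma> \<phi> \<longrightarrow> seq_true neg I \<Gamma> \<psi> \<longrightarrow> seq_true neg I \<Gamma> (And \<phi> \<psi>)"
    by (simp add: seq_true_def hand)
  have AE1: "\<forall>\<Gamma> \<phi> \<psi>. seq_true neg I \<Gamma> (And \<phi> \<psi>) \<longrightarrow> seq_true neg I \<Gamma> \<phi>"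
    by (simp add: seq_true_def hand)
  have AE2: "\<forall>\<Gamma> \<phi> \<psi>. seq_true neg I \<Gamma> (And \<phi> \<psi>) \<longrightarrow> seq_true neg I \<Gamma> \<psi>"
    by (simp add: seq_true_def hand)
  show ?thesis using A C P E AI AE1 AE2 IM IE EM EX by blast
qed

end
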